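(* Every $1$-Sperner hypergraph ${\cal H}=(V,{\cal E})$ is equilizable, i.e., there exist a weight function $w:V\to\mathbb{Z}_{\ge0}$ and a threshold $t\in\mathbb{Z}_{\ge0}$ such that for every $X\subseteq V$, $\sum_{x\in X}w(x)=t$ if and only if $X\in{\cal E}$.
   Context: A hypergraph ${\cal H}=(V,{\cal E})$ consists of a finite vertex set $V$ and a set ${\cal E}$ of subsets of $V$. It is $1$-Sperner if every two distinct hyperedges $e,f$ satisfy $\min\{|e\setminus f|,|f\setminus e|\}=1$. *)

theory Defs
  imports Main
begin

definition hypergraph :: "'a set \<Rightarrow> 'a set set \<Rightarrow> bool" where
  "hypergraph V E \<longleftrightarrow> finite V \<and> (\<forall>e\<in>E. e \<subseteq> V)"

definition one_sperner :: "'a set set \<Rightarrow> bool" where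
  "one_sperner E \<longleftrightarrow>
     (\<forall>e\<in>E. \<forall>f\<in>E. e \<noteq> f \<longrightarrow> min (card (e - f)) (card (f - e)) = 1)"

definition equilizable :: "'a set \<Rightarrow> 'a set set \<Rightarrow> bool" where
  "equilizable V E \<longleftrightarrow>
     (\<exists>(w :: 'a \<Rightarrow> nat) (t :: nat). \<forall>X. X \<subseteq> V \<longrightarrow> ((\<Sum>x\<in>X. w x) = t \<longleftrightarrow> X \<in> E))"

end

theory Submission imports Defs begin

lemma card_diff_one:
  assumes "one_sperner E" "e \<in> E" "g \<in> E" "e \<noteq> g" "finite e" "finite g" "card e \<le> card g"
  shows "card (e - g) = 1"
proof -
  have 1: "card (e - g) = card e - card (e \<inter> g)" using assms by (simp add: card_Diff_subset_Int)
  have 2: "card (g - e) = card g - card (e \<inter> g)" using assms by (simp add: card_Diff_subset_Int Int_commute)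
  have "min (card (e - g)) (card (g - e)) = 1" using assms unfolding one_sperner_def by blast
  with 1 2 assms(7) show ?thesis by (simp add: min_def split: if_splits)
qed

lemma sp_min: "one_sperner E \<Longrightarrow> e \<in> E \<Longrightarrow> f \<in> E \<Longrightarrow> e \<noteq> f \<Longrightarrow> min (card (e - f)) (card (f - e)) = 1"
  unfolding one_sperner_def by blast

lemma card1_mem: "card A = 1 \<Longrightarrow> z \<in> A \<Longrightarrow> A = {z}"
  by (metis card_1_singletonE singletonD)

lemma good_vertex:
  assumes fin: "finite V" and sub: "\<forall>e\<in>E. e \<subseteq> V" and sp: "one_sperner E" and ne: "V \<noteq> {}"
  shows "\<exists>z\<in>V. \<forall>e\<in>E. \<forall>g\<in>E. z \<in> e \<longrightarrow> z \<notin> g \<longrightarrow> e - g = {z}"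
proof (cases "\<forall>e\<in>E. \<forall>g\<in>E. card e = card g")
  case True
  obtain z where z: "z \<in> V" using ne by blast
  have "\<forall>e\<in>E. \<forall>g\<in>E. z \<in> e \<longrightarrow> z \<notin> g \<longrightarrow> e - g = {z}"
  proof (intro ballI impI)
    fix e g assume e: "e \<in> E" and g: "g \<in> E" and "z \<in> e" "z \<notin> g"
    then have "e \<noteq> g" by blast
    have "finite e" "finite g" using e g sub fin finite_subset by blast+
    moreover have "card e = card g" using True e g by blast
    ultimately have "card (e - g) = 1" using card_diff_one[OF sp e g \<open>e \<noteq> g\<close>] by simp
    then show "e - g = {z}" by (rule card1_mem) (use \<open>z \<in> e\<close> \<open>z \<notin> g\<close> in blast)
  qed
  then show ?thesis using z by blast
next
  case False
  have finE: "finite E" using sub fin finite_subset[of E "Pow V"] by auto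
  have fe: "\<And>e. e \<in> E \<Longrightarrow> finite e" using sub fin finite_subset by blast
  have Ene: "E \<noteq> {}" using False by blast
  have "Min (card ` E) \<in> card ` E" using finE Ene by simp
  then obtain e0 where e0: "e0 \<in> E" "card e0 = Min (card ` E)" by auto
  have "Max (card ` E) \<in> card ` E" using finE Ene by simp
  then obtain f where f: "f \<in> E" "card f = Max (card ` E)" by auto
  have mn: "\<And>g. g \<in> E \<Longrightarrow> card e0 \<le> card g" using e0 finE by simp
  have mx: "\<And>g. g \<in> E \<Longrightarrow> card g \<le> card f" using f finE by simp
  have "card e0 < card f"
  proof (rule ccontr)
    assume "\<not> card e0 < card f"
    then have "card g = card e0" if "g \<in> E" for g using mn[OF that] mx[OF that] by linarith
    then show False using False by auto
  qed
  then have "e0 \<noteq> f" by blast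
  have "card (e0 - f) = 1" by (rule card_diff_one[OF sp e0(1) f(1) \<open>e0 \<noteq> f\<close> fe[OF e0(1)] fe[OF f(1)] mn[OF f(1)]])
  then obtain z where z: "e0 - f = {z}" by (meson card_1_singletonE)
  have zV: "z \<in> V" using z sub e0 by blast
  have "\<forall>e\<in>E. \<forall>g\<in>E. z \<in> e \<longrightarrow> z \<notin> g \<longrightarrow> e - g = {z}"
  proof (intro ballI impI)
    fix e g assume e: "e \<in> E" and g: "g \<in> E" and ze: "z \<in> e" and zg: "z \<notin> g"
    have "e \<noteq> f" using ze z by blast
    have "card (e - f) = 1" by (rule card_diff_one[OF sp e f(1) \<open>e \<noteq> f\<close> fe[OF e] fe[OF f(1)] mx[OF e]])
    then have ef: "e - f = {z}" by (rule card1_mem) (use ze z in blast)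
    have "g \<noteq> e0" using zg z by blast
    have "card (e0 - g) = 1" by (rule card_diff_one[OF sp e0(1) g \<open>g \<noteq> e0\<close>[symmetric] fe[OF e0(1)] fe[OF g] mn[OF g]])
    then have e0g: "e0 - g = {z}" by (rule card1_mem) (use zg z in blast)
    show "e - g = {z}"
    proof (cases "e = e0")
      case True then show ?thesis using e0g by simp
    next
      case ne0: False
      have "card (e0 - e) = 1" by (rule card_diff_one[OF sp e0(1) e ne0[symmetric] fe[OF e0(1)] fe[OF e] mn[OF e]])
      then obtain u where u: "e0 - e = {u}" by (meson card_1_singletonE)
      show ?thesis
      proof (cases "g = f")
        case True then show ?thesis using ef by simp
      next
        case gf: False
        have "card (g - f) = 1" by (rule card_diff_one[OF sp g f(1) gf fe[OF g] fe[OF f(1)] mx[OF g]])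
        then obtain y where y: "g - f = {y}" by (meson card_1_singletonE)
        show ?thesis
        proof (rule ccontr)
          assume nz: "e - g \<noteq> {z}"
          then obtain x where x: "x \<in> e - g" "x \<noteq> z" using ze zg by blast
          have "{x, z} \<subseteq> e - g" using x ze zg by blast
          then have "card {x, z} \<le> card (e - g)" by (intro card_mono) (use fe e in auto)
          then have c2: "card (e - g) \<ge> 2" using x by simp
          have "e \<noteq> g" using ze zg by blast
          then have "min (card (e - g)) (card (g - e)) = 1" by (rule sp_min[OF sp e g])
          then have "card (g - e) = 1" using c2 by (simp add: min_def split: if_splits)
          moreover have "u \<in> g - e"
          proof -
            have u1: "u \<in> e0" "u \<notin> e" using u by auto
            then have "u \<noteq> z" using ze by auto
            then have "u \<notin> e0 - g" using e0g by auto
            then show ?thesis using u1 by auto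
          qed
          ultimately have ge: "g - e = {u}" by (rule card1_mem)
          have "u \<in> f"
          proof -
            have u1: "u \<in> e0" "u \<notin> e" using u by auto
            then have "u \<noteq> z" using ze by auto
            then have "u \<notin> e0 - f" using z by auto
            then show ?thesis using u1 by auto
          qed
          have y1: "y \<in> g" "y \<notin> f" using y by auto
          then have "y \<noteq> z" using zg by auto
          then have "y \<notin> e - f" using ef by auto
          then have "y \<notin> e" using y1 by auto
          then have "y \<in> g - e" using y1 by auto
          then have "y = u" using ge by auto
          then show False using y1 \<open>u \<in> f\<close> by auto
        qed
      qed
    qed
  qed
  then show ?thesis using zV by blast
qed


lemma normalize:
  fixes w :: "'a \<Rightarrow> nat"
  assumes fin: "finite V" and sub: "\<forall>e\<in>E. e \<subseteq> V" and sp: "one_sperner E"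
    and eq: "\<forall>X. X \<subseteq> V \<longrightarrow> (sum w X = t \<longleftrightarrow> X \<in> E)"
  shows "\<exists>(w'::'a \<Rightarrow> nat) t'. (\<forall>x\<in>V. 0 < w' x) \<and> t' \<le> sum w' V + 1 \<and>
           (\<forall>X. X \<subseteq> V \<longrightarrow> (sum w' X = t' \<longleftrightarrow> X \<in> E))"
proof (cases "E = {}")
  case True
  have "\<forall>X. X \<subseteq> V \<longrightarrow> (sum (\<lambda>_. 1::nat) X = card V + 1 \<longleftrightarrow> X \<in> E)"
  proof (intro allI impI)
    fix X assume "X \<subseteq> V"
    then have "card X \<le> card V" using fin by (simp add: card_mono)
    then show "(sum (\<lambda>_. 1::nat) X = card V + 1 \<longleftrightarrow> X \<in> E)" using True by simp
  qed
  then show ?thesis by (intro exI[of _ "\<lambda>_. 1::nat"] exI[of _ "card V + 1"]) simp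
next
  case False
  then obtain e where e: "e \<in> E" by blast
  have eV: "e \<subseteq> V" using e sub by blast
  have fe: "finite e" using eV fin finite_subset by blast
  have te: "sum w e = t" using eq eV e by blast
  have pos: "\<forall>x\<in>V. 0 < w x"
  proof (rule ccontr)
    assume "\<not> (\<forall>x\<in>V. 0 < w x)"
    then obtain x where x: "x \<in> V" "w x = 0" by auto
    have s1: "sum w (insert x e) = t"
      using te x fe by (cases "x \<in> e") (auto simp: insert_absorb)
    have s2: "sum w (e - {x}) = t"
    proof (cases "x \<in> e")
      case True
      then have "sum w e = w x + sum w (e - {x})" using fe by (simp add: sum.remove)
      then show ?thesis using te x by simp
    next
      case False then show ?thesis using te by simp
    qed
    have i1: "insert x e \<in> E" using s1 eq eV x by simp
    have "e - {x} \<subseteq> V" using eV by blast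
    then have i2: "e - {x} \<in> E" using s2 eq by blast
    have "insert x e \<noteq> e - {x}" by auto
    then have "min (card (insert x e - (e - {x}))) (card ((e - {x}) - insert x e)) = 1"
      by (rule sp_min[OF sp i1 i2])
    moreover have "(e - {x}) - insert x e = {}" by auto
    ultimately show False by simp
  qed
  have "t \<le> sum w V" using te eV fin by (metis sum_mono2 zero_le)
  then show ?thesis using pos eq by (intro exI[of _ w] exI[of _ t]) simp
qed

lemma mod_split:
  fixes x u a y v :: nat
  assumes "x < a" "u < a"
  shows "x + a * y = u + a * v \<longleftrightarrow> x = u \<and> y = v"
proof
  assume h: "x + a * y = u + a * v"
  have "x = (x + a * y) mod a" using assms by simp
  also have "\<dots> = u" using h assms by simp
  finally have "x = u" .
  moreover then have "a * y = a * v" using h by simp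
  ultimately show "x = u \<and> y = v" using assms by simp
qed simp

lemma sum_full:
  fixes w :: "'a \<Rightarrow> nat"
  assumes "finite S" "\<forall>x\<in>S. 0 < w x" "A \<subseteq> S" "sum w A = sum w S"
  shows "A = S"
proof -
  have "sum w S = sum w A + sum w (S - A)" using assms by (metis add.commute sum.subset_diff)
  then have "sum w (S - A) = 0" using assms by simp
  then have "\<forall>x\<in>S - A. w x = 0" using assms by simp
  then have "S - A = {}" using assms by fastforce
  then show ?thesis using assms by blast
qed


lemma main:
  "finite V \<Longrightarrow> \<forall>e\<in>E. e \<subseteq> V \<Longrightarrow> one_sperner E \<Longrightarrow>
   \<exists>(w::'a \<Rightarrow> nat) t. \<forall>X. X \<subseteq> V \<longrightarrow> (sum w X = t \<longleftrightarrow> X \<in> E)"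
proof (induction "card V" arbitrary: V E rule: less_induct)
  case less
  note fin = less.prems(1) and sub = less.prems(2) and sp = less.prems(3)
  show ?case
  proof (cases "V = {}")
    case True
    have "\<forall>X. X \<subseteq> V \<longrightarrow> (sum (\<lambda>_. 0::nat) X = (if {} \<in> E then 0 else 1) \<longleftrightarrow> X \<in> E)"
      using True by auto
    then show ?thesis by blast
  next
    case False
    obtain z where zV: "z \<in> V" and zg: "\<forall>e\<in>E. \<forall>g\<in>E. z \<in> e \<longrightarrow> z \<notin> g \<longrightarrow> e - g = {z}"
      using good_vertex[OF fin sub sp False] by blast
    define V1 where "V1 = {x \<in> V - {z}. \<forall>g\<in>E. z \<notin> g \<longrightarrow> x \<in> g}"
    define V2 where "V2 = V - {z} - V1"
    define E1 where "E1 = (\<lambda>e. e - {z}) ` {e\<in>E. z \<in> e}"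
    define E2 where "E2 = (\<lambda>g. g - V1) ` {g\<in>E. z \<notin> g}"
    have V1s: "V1 \<subseteq> V - {z}" and V2s: "V2 \<subseteq> V - {z}" unfolding V1_def V2_def by auto
    have fin1: "finite V1" and fin2: "finite V2" using V1s V2s fin finite_subset by blast+
    have "V1 \<subset> V" using V1s zV by blast
    then have c1: "card V1 < card V" by (rule psubset_card_mono[OF fin])
    have "V2 \<subset> V" using V2s zV by blast
    then have c2: "card V2 < card V" by (rule psubset_card_mono[OF fin])
    have eV1: "e - {z} \<subseteq> V1" if "e \<in> E" "z \<in> e" for e
    proof
      fix x assume x: "x \<in> e - {z}"
      have "x \<in> V" using x that sub by blast
      moreover have "x \<in> g" if "g \<in> E" "z \<notin> g" for g
      proof -
        have "e - g = {z}" using zg \<open>e \<in> E\<close> \<open>z \<in> e\<close> that by blast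
        then show ?thesis using x by blast
      qed
      ultimately show "x \<in> V1" using x unfolding V1_def by blast
    qed
    have gV1: "V1 \<subseteq> g" if "g \<in> E" "z \<notin> g" for g using that unfolding V1_def by blast
    have sub1: "\<forall>e\<in>E1. e \<subseteq> V1" unfolding E1_def using eV1 by blast
    have sub2: "\<forall>e\<in>E2. e \<subseteq> V2" unfolding E2_def V2_def using sub by blast
    have sp1: "one_sperner E1"
      unfolding one_sperner_def
    proof (intro ballI impI)
      fix a b assume a: "a \<in> E1" and b: "b \<in> E1" and ab: "a \<noteq> b"
      obtain e where e: "e \<in> E" "z \<in> e" "a = e - {z}" using a unfolding E1_def by blast
      obtain f where f: "f \<in> E" "z \<in> f" "b = f - {z}" using b unfolding E1_def by blast
      have "e \<noteq> f" using ab e f by blast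
      have "a - b = e - f" "b - a = f - e" using e f by auto
      then show "min (card (a - b)) (card (b - a)) = 1" using sp_min[OF sp e(1) f(1) \<open>e \<noteq> f\<close>] by simp
    qed
    have sp2: "one_sperner E2"
      unfolding one_sperner_def
    proof (intro ballI impI)
      fix a b assume a: "a \<in> E2" and b: "b \<in> E2" and ab: "a \<noteq> b"
      obtain e where e: "e \<in> E" "z \<notin> e" "a = e - V1" using a unfolding E2_def by blast
      obtain f where f: "f \<in> E" "z \<notin> f" "b = f - V1" using b unfolding E2_def by blast
      have "e \<noteq> f" using ab e f by blast
      have "a - b = e - f" "b - a = f - e" using e f gV1[OF e(1) e(2)] gV1[OF f(1) f(2)] by auto
      then show "min (card (a - b)) (card (b - a)) = 1" using sp_min[OF sp e(1) f(1) \<open>e \<noteq> f\<close>] by simp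
    qed
    obtain w1' :: "'a \<Rightarrow> nat" and t1' where h1: "\<forall>X. X \<subseteq> V1 \<longrightarrow> (sum w1' X = t1' \<longleftrightarrow> X \<in> E1)"
      using less.hyps[OF c1 fin1 sub1 sp1] by (elim exE conjE) (rule that; assumption)
    obtain w1 :: "'a \<Rightarrow> nat" and t1 where pos1: "\<forall>x\<in>V1. 0 < w1 x" and t1b: "t1 \<le> sum w1 V1 + 1"
        and eq1: "\<forall>X. X \<subseteq> V1 \<longrightarrow> (sum w1 X = t1 \<longleftrightarrow> X \<in> E1)"
      using normalize[OF fin1 sub1 sp1 h1] by (elim exE conjE) (rule that; assumption)
    obtain w2' :: "'a \<Rightarrow> nat" and t2' where h2: "\<forall>X. X \<subseteq> V2 \<longrightarrow> (sum w2' X = t2' \<longleftrightarrow> X \<in> E2)"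
      using less.hyps[OF c2 fin2 sub2 sp2] by (elim exE conjE) (rule that; assumption)
    obtain w2 :: "'a \<Rightarrow> nat" and t2 where pos2: "\<forall>x\<in>V2. 0 < w2 x"
        and eq2: "\<forall>X. X \<subseteq> V2 \<longrightarrow> (sum w2 X = t2 \<longleftrightarrow> X \<in> E2)"
      using normalize[OF fin2 sub2 sp2 h2] by (elim exE conjE) (rule that; assumption)
    define W1 where "W1 = sum w1 V1"
    define a where "a = W1 + 2"
    define t where "t = W1 + a * t2"
    define c where "c = (if t1 \<le> t then t - t1 else t + 1)"
    define w where "w = (\<lambda>x. if x = z then c else if x \<in> V1 then w1 x else a * w2 x)"
    have "\<forall>X. X \<subseteq> V \<longrightarrow> (sum w X = t \<longleftrightarrow> X \<in> E)"
    proof (intro allI impI)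
      fix X assume XV: "X \<subseteq> V"
      define A where "A = X \<inter> V1"
      define B where "B = X \<inter> V2"
      have AV1: "A \<subseteq> V1" and BV2: "B \<subseteq> V2" unfolding A_def B_def by auto
      have finX: "finite X" using XV fin finite_subset by blast
      have Xdec: "X = (X \<inter> {z}) \<union> (A \<union> B)" unfolding A_def B_def V2_def using XV by auto
      have sumX: "sum w X = sum w (X \<inter> {z}) + (sum w A + sum w B)"
      proof -
        have "sum w X = sum w ((X \<inter> {z}) \<union> (A \<union> B))" using Xdec by simp
        also have "\<dots> = sum w (X \<inter> {z}) + sum w (A \<union> B)"
          by (rule sum.union_disjoint) (use finX V1s V2s in \<open>auto simp: A_def B_def\<close>)
        also have "sum w (A \<union> B) = sum w A + sum w B"
          by (rule sum.union_disjoint) (use finX in \<open>auto simp: A_def B_def V2_def\<close>)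
        finally show ?thesis .
      qed
      have sz: "sum w (X \<inter> {z}) = (if z \<in> X then c else 0)"
        by (cases "z \<in> X") (auto simp: w_def Int_insert_right)
      have sA: "sum w A = sum w1 A"
        by (rule sum.cong) (use V1s in \<open>auto simp: w_def A_def\<close>)
      have sB: "sum w B = a * sum w2 B"
      proof -
        have "sum w B = sum (\<lambda>x. a * w2 x) B"
          by (rule sum.cong) (use V2s in \<open>auto simp: w_def B_def V2_def\<close>)
        then show ?thesis by (simp add: sum_distrib_left)
      qed
      have key: "sum w X = (if z \<in> X then c else 0) + sum w1 A + a * sum w2 B"
        using sumX sz sA sB by simp
      have wA: "sum w1 A \<le> W1" unfolding W1_def using AV1 fin1 by (simp add: sum_mono2)
      have aW: "W1 < a" unfolding a_def by simp
      show "sum w X = t \<longleftrightarrow> X \<in> E"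
      proof (cases "z \<in> X")
        case False
        have memE: "X \<in> E \<longleftrightarrow> A = V1 \<and> B \<in> E2"
        proof
          assume XE: "X \<in> E"
          have "V1 \<subseteq> X" using gV1[OF XE False] .
          then have "A = V1" unfolding A_def by blast
          moreover have "B = X - V1" unfolding B_def V2_def using XV False by blast
          then have "B \<in> E2" unfolding E2_def using XE False by blast
          ultimately show "A = V1 \<and> B \<in> E2" by blast
        next
          assume h: "A = V1 \<and> B \<in> E2"
          then obtain g where g: "g \<in> E" "z \<notin> g" "B = g - V1" unfolding E2_def by blast
          have "X = A \<union> B" unfolding A_def B_def V2_def using XV False by auto
          also have "\<dots> = g" using h g gV1[OF g(1) g(2)] by auto
          finally show "X \<in> E" using g by simp
        qed
        have "sum w X = t \<longleftrightarrow> sum w1 A + a * sum w2 B = W1 + a * t2"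
          using key False unfolding t_def by simp
        also have "\<dots> \<longleftrightarrow> sum w1 A = W1 \<and> sum w2 B = t2"
          by (rule mod_split) (use wA aW in auto)
        also have "\<dots> \<longleftrightarrow> A = V1 \<and> B \<in> E2"
        proof -
          have "sum w1 A = W1 \<longleftrightarrow> A = V1"
            using sum_full[OF fin1 pos1 AV1] unfolding W1_def by blast
          moreover have "sum w2 B = t2 \<longleftrightarrow> B \<in> E2" using eq2 BV2 by blast
          ultimately show ?thesis by simp
        qed
        finally show ?thesis using memE by simp
      next
        case True
        have memE: "X \<in> E \<longleftrightarrow> B = {} \<and> A \<in> E1"
        proof
          assume XE: "X \<in> E"
          have XV1: "X - {z} \<subseteq> V1" using eV1[OF XE True] .
          then have "B = {}" unfolding B_def V2_def by blast
          moreover have "A = X - {z}" unfolding A_def using XV1 V1s by blast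
          then have "A \<in> E1" unfolding E1_def using XE True by blast
          ultimately show "B = {} \<and> A \<in> E1" by blast
        next
          assume h: "B = {} \<and> A \<in> E1"
          then obtain e where e: "e \<in> E" "z \<in> e" "A = e - {z}" unfolding E1_def by blast
          have "X = insert z A" using XV True h[unfolded B_def V2_def] unfolding A_def by auto
          also have "\<dots> = e" using e by auto
          finally show "X \<in> E" using e by simp
        qed
        have B0: "sum w2 B = 0 \<longleftrightarrow> B = {}"
        proof -
          have fB: "finite B" using BV2 fin2 finite_subset by blast
          have "sum w2 B = 0 \<longleftrightarrow> (\<forall>x\<in>B. w2 x = 0)" using fB by simp
          also have "\<dots> \<longleftrightarrow> B = {}" using pos2 BV2 by fastforce
          finally show ?thesis .
        qed
        show ?thesis
        proof (cases "t1 \<le> t")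
          case le: True
          have "sum w X = t \<longleftrightarrow> sum w1 A + a * sum w2 B = t1 + a * 0"
            using key True le unfolding c_def by auto
          also have "\<dots> \<longleftrightarrow> sum w1 A = t1 \<and> sum w2 B = 0"
            by (rule mod_split) (use wA aW t1b in \<open>auto simp: W1_def a_def\<close>)
          also have "\<dots> \<longleftrightarrow> A \<in> E1 \<and> B = {}"
          proof -
            have e1: "sum w1 A = t1 \<longleftrightarrow> A \<in> E1" using eq1 AV1 by blast
            show ?thesis using e1 B0 by simp
          qed
          finally show ?thesis using memE by auto
        next
          case gt: False
          have "sum w X \<noteq> t" using key True gt unfolding c_def by simp
          moreover have "A \<notin> E1"
          proof
            assume "A \<in> E1"
            then have "sum w1 A = t1" using eq1 AV1 by blast
            then show False using wA gt unfolding t_def by simp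
          qed
          ultimately show ?thesis using memE by auto
        qed
      qed
    qed
    then show ?thesis by blast
  qed
qed

theorem proposition12:
  assumes "hypergraph V E" and "one_sperner E"
  shows "equilizable V E"
  using main[of V E] assms unfolding hypergraph_def equilizable_def by blast

end
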